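(* Let $n\ge 1$ with $n\not\equiv 1 \pmod 3$, and consider peg solitaire on the triangular board $T_n$. If a sequence of jumps on $T_n$ ends in a board position with exactly one peg, then none of the board positions occurring in this sequence (including the initial one) has $120^\circ$ rotational symmetry, i.e., no such position $P$ satisfies $P(r(h))=P(h)$ for every hole $h$, where $r(x,y)=(y-x,\,n-1-x)$.
   Context: The triangular board $T_n$ is the set of holes with integer skew coordinates $(x,y)$ satisfying $0\le x\le y\le n-1$. A board position $P$ assigns to each hole $h$ either a peg or no peg. A jump takes a peg at hole $p$, jumps it over a peg at an adjacent hole $p+d$ into an empty hole $p+2d$, where $d$ is one of the six directions $(\pm1,0)$, $(0,\pm1)$, $(1,1)$, $(-1,-1)$ and all three holes lie in $T_n$; the jumped-over peg is removed. The map $r(x,y)=(y-x,n-1-x)$ is the counterclockwise rotation of $T_n$ by $120^\circ$ in skew coordinates; a position has $120^\circ$ rotational symmetry if it is invariant under $r$. *)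

theory Defs
  imports Main
begin

type_synonym hole = "int \<times> int"
type_synonym position = "hole \<Rightarrow> bool"  (* True = peg *)

definition board :: "nat \<Rightarrow> hole set" where
  "board n = {(x, y). 0 \<le> x \<and> x \<le> y \<and> y \<le> int n - 1}"

definition is_position :: "nat \<Rightarrow> position \<Rightarrow> bool" where
  "is_position n P \<longleftrightarrow> (\<forall>h. P h \<longrightarrow> h \<in> board n)"

definition directions :: "hole set" where
  "directions = {(1,0), (-1,0), (0,1), (0,-1), (1,1), (-1,-1)}"

definition hadd :: "hole \<Rightarrow> hole \<Rightarrow> hole" where
  "hadd a b = (fst a + fst b, snd a + snd b)"

definition hscale :: "int \<Rightarrow> hole \<Rightarrow> hole" where
  "hscale k d = (k * fst d, k * snd d)"

definition jump :: "nat \<Rightarrow> position \<Rightarrow> position \<Rightarrow> bool" where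
  "jump n P Q \<longleftrightarrow> (\<exists>p d. d \<in> directions \<and>
      p \<in> board n \<and> hadd p d \<in> board n \<and> hadd p (hscale 2 d) \<in> board n \<and>
      P p \<and> P (hadd p d) \<and> \<not> P (hadd p (hscale 2 d)) \<and>
      Q = P(p := False, hadd p d := False, hadd p (hscale 2 d) := True))"

definition rot :: "nat \<Rightarrow> hole \<Rightarrow> hole" where
  "rot n h = (snd h - fst h, int n - 1 - fst h)"

definition rot_symmetric :: "nat \<Rightarrow> position \<Rightarrow> bool" where
  "rot_symmetric n P \<longleftrightarrow> (\<forall>h \<in> board n. P (rot n h) = P h)"

definition jump_sequence :: "nat \<Rightarrow> position list \<Rightarrow> bool" where
  "jump_sequence n Ps \<longleftrightarrow> Ps \<noteq> [] \<and> is_position n (hd Ps) \<and>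
     (\<forall>i. Suc i < length Ps \<longrightarrow> jump n (Ps ! i) (Ps ! Suc i))"

definition one_peg :: "nat \<Rightarrow> position \<Rightarrow> bool" where
  "one_peg n P \<longleftrightarrow> card {h \<in> board n. P h} = 1"

end

theory Submission
  imports Defs
begin

definition col :: "hole \<Rightarrow> int" where
  "col h = (fst h + snd h) mod 3"

definition cnt :: "nat \<Rightarrow> position \<Rightarrow> int \<Rightarrow> nat" where
  "cnt n P c = card {h \<in> board n. P h \<and> col h = c}"

lemma finite_board: "finite (board n)"
proof -
  have "board n \<subseteq> {0..int n - 1} \<times> {0..int n - 1}"
    by (auto simp: board_def)
  then show ?thesis by (rule finite_subset) auto
qed

lemma col_range: "col h \<in> {0,1,2}"
  unfolding col_def by auto

lemma rot_board: "h \<in> board n \<Longrightarrow> rot n h \<in> board n"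
  by (auto simp: board_def rot_def)

lemma col_rot: "col (rot n h) = (col h + int n - 1) mod 3"
proof -
  have "snd h - fst h + (int n - 1 - fst h) = (fst h + snd h + (int n - 1)) + 3 * (- fst h)" by simp
  then have "col (rot n h) = (fst h + snd h + (int n - 1)) mod 3" unfolding col_def rot_def
    by (simp only: fst_conv snd_conv mod_mult_self2)
  also have "\<dots> = (col h + int n - 1) mod 3" unfolding col_def by (metis add_diff_eq mod_add_left_eq)
  finally show ?thesis .
qed

lemma inj_rot: "inj_on (rot n) A"
  by (auto simp: inj_on_def rot_def prod_eq_iff)

lemma sym_le:
  assumes "rot_symmetric n P"
  shows "cnt n P c \<le> cnt n P ((c + int n - 1) mod 3)"
proof -
  have "rot n ` {h \<in> board n. P h \<and> col h = c} \<subseteq> {h \<in> board n. P h \<and> col h = (c + int n - 1) mod 3}"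
    using assms by (auto simp: rot_symmetric_def rot_board col_rot)
  then show ?thesis unfolding cnt_def
    by (intro card_inj_on_le[OF inj_rot]) (auto intro: finite_subset[OF _ finite_board])
qed

lemma sym_eq:
  assumes "rot_symmetric n P" "n mod 3 \<noteq> 1"
  shows "cnt n P 0 = cnt n P 1 \<and> cnt n P 1 = cnt n P 2"
proof -
  have k: "(int n - 1) mod 3 = 1 \<or> (int n - 1) mod 3 = 2" using assms(2) by presburger
  have a: "cnt n P 0 \<le> cnt n P ((0 + int n - 1) mod 3)" by (rule sym_le[OF assms(1)])
  have b: "cnt n P 1 \<le> cnt n P ((1 + int n - 1) mod 3)" by (rule sym_le[OF assms(1)])
  have c: "cnt n P 2 \<le> cnt n P ((2 + int n - 1) mod 3)" by (rule sym_le[OF assms(1)])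
  from k show ?thesis
  proof
    assume h: "(int n - 1) mod 3 = 1"
    have e: "(0 + int n - 1) mod 3 = 1" "(1 + int n - 1) mod 3 = 2" "(2 + int n - 1) mod 3 = 0"
      using h by presburger+
    show ?thesis using a[unfolded e(1)] b[unfolded e(2)] c[unfolded e(3)] by linarith
  next
    assume h: "(int n - 1) mod 3 = 2"
    have e: "(0 + int n - 1) mod 3 = 2" "(1 + int n - 1) mod 3 = 0" "(2 + int n - 1) mod 3 = 1"
      using h by presburger+
    show ?thesis using a[unfolded e(1)] b[unfolded e(2)] c[unfolded e(3)] by linarith
  qed
qed

lemma odd_step_aux:
  assumes "finite S" "a \<in> S" "card (S - {a}) = card S - 1"
  shows "odd (card (S - {a}) + card S)"
proof -
  have "card S > 0" using assms card_gt_0_iff by blast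
  then show ?thesis using assms(3) by presburger
qed

lemma three_aux:
  fixes c s :: int
  assumes "c \<in> {0,1,2}" "s \<in> {1,-1,2,-2}"
  shows "c \<noteq> (c + s) mod 3 \<and> c \<noteq> (c + 2 * s) mod 3 \<and> (c + s) mod 3 \<noteq> (c + 2 * s) mod 3"
  using assms by auto

lemma step_card:
  assumes fin: "finite B" and in3: "a \<in> B" "b \<in> B" "e \<in> B"
    and pa: "P a" "P b" "\<not> P e"
    and cd: "col a \<noteq> col b" "col a \<noteq> col e" "col b \<noteq> col e"
    and c: "c \<in> {0,1,2}"
  shows "odd (card {h \<in> B. (P(a := False, b := False, e := True)) h \<and> col h = c}
             + card {h \<in> B. P h \<and> col h = c})"
proof -
  let ?Q = "P(a := False, b := False, e := True)"
  have ne: "a \<noteq> b" "a \<noteq> e" "b \<noteq> e" using cd by auto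
  have fS: "finite {h \<in> B. P h \<and> col h = c}" using fin by auto
  have "col a = c \<or> col b = c \<or> col e = c"
    using cd c col_range[of a] col_range[of b] col_range[of e] by auto
  moreover
  { assume h: "col a = c"
    have "{h \<in> B. ?Q h \<and> col h = c} = {h \<in> B. P h \<and> col h = c} - {a}"
      using h cd ne by auto
    moreover have m: "a \<in> {h \<in> B. P h \<and> col h = c}" using h in3 pa by auto
    ultimately have ?thesis
      using odd_step_aux[OF fS m card_Diff_singleton[OF m]] by simp
  }
  moreover
  { assume h: "col b = c"
    have "{h \<in> B. ?Q h \<and> col h = c} = {h \<in> B. P h \<and> col h = c} - {b}"
      using h cd ne by auto
    moreover have m: "b \<in> {h \<in> B. P h \<and> col h = c}" using h in3 pa by auto
    ultimately have ?thesis
      using odd_step_aux[OF fS m card_Diff_singleton[OF m]] by simp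
  }
  moreover
  { assume h: "col e = c"
    have "{h \<in> B. ?Q h \<and> col h = c} = insert e {h \<in> B. P h \<and> col h = c}"
      using h cd ne in3 by auto
    moreover have "e \<notin> {h \<in> B. P h \<and> col h = c}" using pa by auto
    ultimately have ?thesis using fS by simp
  }
  ultimately show ?thesis by blast
qed

lemma jump_odd:
  assumes "jump n P Q" "c \<in> {0,1,2}"
  shows "odd (cnt n Q c + cnt n P c)"
proof -
  obtain p d where d: "d \<in> directions" and b: "p \<in> board n" "hadd p d \<in> board n"
     "hadd p (hscale 2 d) \<in> board n" and pp: "P p" "P (hadd p d)" "\<not> P (hadd p (hscale 2 d))"
     and Q: "Q = P(p := False, hadd p d := False, hadd p (hscale 2 d) := True)"
    using assms(1) unfolding jump_def by blast
  have cd: "col p \<noteq> col (hadd p d)" "col p \<noteq> col (hadd p (hscale 2 d))"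
    "col (hadd p d) \<noteq> col (hadd p (hscale 2 d))"
  proof -
    have s: "fst d + snd d \<in> {1,-1,2,-2}" using d by (auto simp: directions_def)
    have e1: "col (hadd p d) = (col p + (fst d + snd d)) mod 3"
    proof -
      have "col (hadd p d) = ((fst p + snd p) + (fst d + snd d)) mod 3"
        by (simp add: col_def hadd_def algebra_simps)
      also have "\<dots> = (col p + (fst d + snd d)) mod 3" by (simp add: col_def mod_add_left_eq)
      finally show ?thesis .
    qed
    have e2: "col (hadd p (hscale 2 d)) = (col p + 2 * (fst d + snd d)) mod 3"
    proof -
      have "col (hadd p (hscale 2 d)) = ((fst p + snd p) + 2 * (fst d + snd d)) mod 3"
        by (simp add: col_def hadd_def hscale_def algebra_simps)
      also have "\<dots> = (col p + 2 * (fst d + snd d)) mod 3" by (simp add: col_def mod_add_left_eq)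
      finally show ?thesis .
    qed
    have r: "col p \<in> {0,1,2}" by (rule col_range)
    show "col p \<noteq> col (hadd p d)" "col p \<noteq> col (hadd p (hscale 2 d))"
      "col (hadd p d) \<noteq> col (hadd p (hscale 2 d))"
      unfolding e1 e2 using three_aux[OF r s] by auto
  qed
  show ?thesis unfolding cnt_def Q
    by (rule step_card[OF finite_board b pp cd assms(2)])
qed

definition par :: "nat \<Rightarrow> position \<Rightarrow> bool \<times> bool" where
  "par n P = (even (cnt n P 0 + cnt n P 1), even (cnt n P 1 + cnt n P 2))"

lemma jump_par: assumes "jump n P Q" shows "par n Q = par n P"
proof -
  have "odd (cnt n Q 0 + cnt n P 0)" "odd (cnt n Q 1 + cnt n P 1)" "odd (cnt n Q 2 + cnt n P 2)"
    using jump_odd[OF assms] by auto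
  then show ?thesis unfolding par_def prod_eq_iff fst_conv snd_conv by presburger
qed

lemma one_peg_par:
  assumes "one_peg n P"
  shows "par n P \<noteq> (True, True)"
proof -
  obtain h0 where h0: "{h \<in> board n. P h} = {h0}"
    using assms unfolding one_peg_def by (meson card_1_singletonE)
  have "\<And>c. {h \<in> board n. P h \<and> col h = c} = (if col h0 = c then {h0} else {})"
    using h0 by auto
  then have "\<And>c. cnt n P c = (if col h0 = c then 1 else 0)" unfolding cnt_def by simp
  then show ?thesis using col_range[of h0] unfolding par_def by auto
qed

theorem theorem2p3:
  fixes n :: nat and Ps :: "position list"
  assumes "n \<ge> 1" and "n mod 3 \<noteq> 1"
    and "jump_sequence n Ps"
    and "one_peg n (last Ps)"
  shows "\<forall>P \<in> set Ps. \<not> rot_symmetric n P"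
proof
  fix P assume P: "P \<in> set Ps"
  have js: "\<And>i. Suc i < length Ps \<Longrightarrow> jump n (Ps ! i) (Ps ! Suc i)" "Ps \<noteq> []"
    using assms(3) unfolding jump_sequence_def by auto
  have all: "i < length Ps \<Longrightarrow> par n (Ps ! i) = par n (Ps ! 0)" for i
  proof (induction i)
    case (Suc i)
    then show ?case using jump_par[OF js(1)[of i]] by simp
  qed simp
  have "par n (last Ps) = par n (Ps ! 0)"
    using all[of "length Ps - 1"] js(2) by (simp add: last_conv_nth)
  moreover obtain i where i: "i < length Ps" "P = Ps ! i" using P by (metis in_set_conv_nth)
  ultimately have "par n P \<noteq> (True, True)" using all[OF i(1)] one_peg_par[OF assms(4)] by simp
  show "\<not> rot_symmetric n P"
  proof
    assume "rot_symmetric n P"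
    from sym_eq[OF this assms(2)] have "par n P = (True, True)" unfolding par_def by simp
    with \<open>par n P \<noteq> (True, True)\<close> show False by simp
  qed
qed

end
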